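(* Let $H(u)=\sum_{n\ge0}\mathbf h_nu^n$, and for $k\ge0$ let $\prod^{\leftarrow}_{0\le j\le k}H(q^j)=H(q^k)H(q^{k-1})\cdots H(q^0)$. Then, as an identity with coefficients in $\mathbb Q[[q,t]]$, \[ \sum_{k\ge0}t^k\,H(q^k)H(q^{k-1})\cdots H(1)=\sum_{n\ge0}\frac{\sum_{L\vDash n}t^{\mathrm{des}(L)}q^{\mathrm{maj}(L)}\mathbf r_L}{(1-t)(1-tq)\cdots(1-tq^n)}, \] where for a nonempty composition $L=(L_1,\dots,L_k)$, $\mathrm{des}(L)=k-1$ and $\mathrm{maj}(L)=(k-1)L_1+(k-2)L_2+\cdots+L_{k-1}$, and for the empty composition $\mathrm{des}=\mathrm{maj}=0$ and $\mathbf r_\emptyset=1$.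
   Context: Work in formal power series in noncommuting variables $X_1,X_2,\dots$ with coefficients in $\mathbb Q[[q,t]]$ ($q,t$ commuting indeterminates commuting with the $X_i$). $\mathbf h_n=\sum_{i_1\le\cdots\le i_n}X_{i_1}\cdots X_{i_n}$, $\mathbf h_0=1$. $L\vDash n$ means $L$ is a composition of $n$. For $L=(L_1,\dots,L_k)\vDash n$, $\mathbf r_L=\sum X_{i_1}\cdots X_{i_n}$ over $(i_1,\dots,i_n)$ with $i_1\le\cdots\le i_{L_1}>i_{L_1+1}\le\cdots\le i_{L_1+L_2}>\cdots>i_{L_1+\cdots+L_{k-1}+1}\le\cdots\le i_n$. *)

theory Defs
  imports "HOL-Computational_Algebra.Formal_Power_Series"
begin

text \<open>Coefficient ring Q[[q,t]], realised as Q[[q]][[t]]: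
  the outer variable is t, the inner variable is q.\<close>
type_synonym coef = "rat fps fps"

definition tvar :: coef where "tvar = fps_X"
definition qvar :: coef where "qvar = fps_const fps_X"

text \<open>Formal power series in noncommuting variables X_1, X_2, ... :
  a word X_{i_1} ... X_{i_n} is the list [i_1,...,i_n] (letters are positive naturals);
  a series maps each word to its coefficient.\<close>
type_synonym ncs = "nat list \<Rightarrow> coef"

definition positive_word :: "nat list \<Rightarrow> bool" where
  "positive_word w \<longleftrightarrow> (\<forall>x\<in>set w. 1 \<le> x)"

definition ncmult :: "ncs \<Rightarrow> ncs \<Rightarrow> ncs" where
  "ncmult f g w = (\<Sum>i\<le>length w. f (take i w) * g (drop i w))"

definition ncsmult :: "coef \<Rightarrow> ncs \<Rightarrow> ncs" where
  "ncsmult c f w = c * f w"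

definition ncsuminf :: "(nat \<Rightarrow> ncs) \<Rightarrow> ncs" where
  "ncsuminf F w = (\<Sum>n. F n w)"

definition hser :: "nat \<Rightarrow> ncs" where
  "hser n w = (if length w = n \<and> sorted w \<and> positive_word w then 1 else 0)"

definition Hser :: "coef \<Rightarrow> ncs" where
  "Hser c = ncsuminf (\<lambda>n. ncsmult (c ^ n) (hser n))"

fun Hprod :: "nat \<Rightarrow> ncs" where
  "Hprod 0 = Hser (qvar ^ 0)"
| "Hprod (Suc k) = ncmult (Hser (qvar ^ Suc k)) (Hprod k)"

definition compositions :: "nat \<Rightarrow> nat list set" where
  "compositions n = {L. (\<forall>x\<in>set L. 1 \<le> x) \<and> sum_list L = n}"

definition des :: "nat list \<Rightarrow> nat" where
  "des L = length L - 1"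

definition maj :: "nat list \<Rightarrow> nat" where
  "maj L = (\<Sum>i<length L. (length L - 1 - i) * L ! i)"

text \<open>Descent positions prescribed by L: L_1, L_1+L_2, ..., L_1+...+L_{k-1}.\<close>
definition comp_bounds :: "nat list \<Rightarrow> nat set" where
  "comp_bounds L = {sum_list (take j L) | j. 1 \<le> j \<and> j < length L}"

text \<open>r_L: sum over words weakly increasing inside blocks of L with strict descents
  between blocks (positions 0-based: w!i > w!(i+1) exactly when i+1 is a block boundary).\<close>
definition rser :: "nat list \<Rightarrow> ncs" where
  "rser L w = (if length w = sum_list L \<and> positive_word w \<and>
       (\<forall>i. Suc i < length w \<longrightarrow> (w ! i > w ! Suc i \<longleftrightarrow> Suc i \<in> comp_bounds L))
     then 1 else 0)"

end

theory Submission
  imports Defs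
begin

definition Phi :: "(nat \<Rightarrow> 'a::comm_ring_1 fps) \<Rightarrow> 'a fps" where
  "Phi a = Abs_fps (\<lambda>n. \<Sum>k\<le>n. fps_nth (a k) (n - k))"

lemma sums_fps_agree:
  fixes f :: "nat \<Rightarrow> 'a::comm_ring_1 fps"
  assumes "\<And>N j. j < N \<Longrightarrow> fps_nth (\<Sum>k<N. f k) j = fps_nth S j"
  shows "f sums S"
  unfolding sums_def tendsto_iff
proof safe
  fix e :: real assume e: "0 < e"
  have "(\<lambda>n. inverse (2 ^ n) :: real) \<longlonglongrightarrow> 0" by (rule LIMSEQ_inverse_realpow_zero) simp
  from order_tendstoD(2)[OF this e] obtain i where i: "inverse (2^i) < (e::real)"
    by (auto simp: eventually_sequentially)
  show "eventually (\<lambda>N. dist (\<Sum>k<N. f k) S < e) sequentially"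
    unfolding eventually_sequentially
  proof (intro exI[of _ "Suc i"] allI impI)
    fix N assume "Suc i \<le> N"
    then have "dist (\<Sum>k<N. f k) S < inverse (2^i)"
      by (intro nth_equal_imp_dist_less) (auto intro: assms)
    with i show "dist (\<Sum>k<N. f k) S < e" by simp
  qed
qed

lemma Phi_sums: "(\<lambda>k. fps_X ^ k * a k) sums Phi a"
proof (rule sums_fps_agree)
  fix N j :: nat assume j: "j < N"
  have "fps_nth (\<Sum>k<N. fps_X ^ k * a k) j = (\<Sum>k<N. if j < k then 0 else fps_nth (a k) (j - k))"
    by (simp add: fps_sum_nth fps_X_power_mult_nth)
  also have "\<dots> = (\<Sum>k\<le>j. fps_nth (a k) (j - k))"
    using j by (intro sum.mono_neutral_cong_right) auto
  finally show "fps_nth (\<Sum>k<N. fps_X ^ k * a k) j = fps_nth (Phi a) j" by (simp add: Phi_def)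
qed

lemma Phi_suminf: "(\<Sum>k. fps_X ^ k * a k) = Phi a"
  using Phi_sums sums_unique by metis

lemma Phi_head: "Phi a = a 0 + fps_X * Phi (\<lambda>k. a (Suc k))"
proof (rule fps_ext)
  fix n show "fps_nth (Phi a) n = fps_nth (a 0 + fps_X * Phi (\<lambda>k. a (Suc k))) n"
  proof (cases n)
    case 0 then show ?thesis by (simp add: Phi_def)
  next
    case (Suc n')
    have "fps_nth (Phi a) n = (\<Sum>k\<le>Suc n'. fps_nth (a k) (Suc n' - k))" by (simp add: Phi_def Suc)
    also have "\<dots> = fps_nth (a 0) (Suc n') + (\<Sum>k\<le>n'. fps_nth (a (Suc k)) (n' - k))"
      by (subst sum.atMost_Suc_shift) simp
    finally show ?thesis using fps_X_mult_nth[of "Phi (\<lambda>k. a (Suc k))" n] by (simp add: Phi_def Suc)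
  qed
qed

lemma Phi_sum: "Phi (\<lambda>k. \<Sum>i\<in>I. b i k) = (\<Sum>i\<in>I. Phi (b i))"
  by (simp add: Phi_def fps_eq_iff fps_sum_nth sum.swap[of _ I])

lemma Phi_cmult: "Phi (\<lambda>k. c * b k) = c * Phi b"
proof -
  have "(\<lambda>k. fps_X ^ k * (c * b k)) sums (c * Phi b)"
  proof (rule sums_fps_agree)
    fix N j :: nat assume j: "j < N"
    have agree: "fps_nth (\<Sum>k<N. fps_X ^ k * b k) i = fps_nth (Phi b) i" if "i \<le> j" for i
    proof -
      have "fps_nth (\<Sum>k<N. fps_X ^ k * b k) i = (\<Sum>k<N. if i < k then 0 else fps_nth (b k) (i - k))"
        by (simp add: fps_sum_nth fps_X_power_mult_nth)
      also have "\<dots> = (\<Sum>k\<le>i. fps_nth (b k) (i - k))"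
        using j that by (intro sum.mono_neutral_cong_right) auto
      finally show ?thesis by (simp add: Phi_def)
    qed
    have "(\<Sum>k<N. fps_X ^ k * (c * b k)) = c * (\<Sum>k<N. fps_X ^ k * b k)"
      by (simp add: sum_distrib_left mult_ac)
    then show "fps_nth (\<Sum>k<N. fps_X ^ k * (c * b k)) j = fps_nth (c * Phi b) j"
      by (simp add: fps_mult_nth agree)
  qed
  with Phi_sums show ?thesis using sums_unique2 by blast
qed

lemma Phi_zero: "Phi (\<lambda>k. 0) = 0"
  by (simp add: Phi_def fps_eq_iff)


definition sp :: "nat list \<Rightarrow> coef" where
  "sp u = (if sorted u \<and> positive_word u then 1 else 0)"

lemma Hser_eq: "Hser c u = c ^ length u * sp u"
proof -
  have "Hser c u = (\<Sum>n. c ^ n * hser n u)"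
    by (simp add: Hser_def ncsuminf_def ncsmult_def)
  also have "\<dots> = (\<Sum>n\<in>{length u}. c ^ n * hser n u)"
    by (rule suminf_finite) (auto simp: hser_def)
  finally show ?thesis by (simp add: hser_def sp_def)
qed

lemma Hprod0: "Hprod 0 w = sp w"
  by (simp add: Hser_eq)

lemma positive_word_take_drop:
  "positive_word (take i w) \<Longrightarrow> positive_word (drop i w) \<Longrightarrow> positive_word w"
  unfolding positive_word_def by (metis Un_iff append_take_drop_id set_append)

lemma positive_word_take: "positive_word w \<Longrightarrow> positive_word (take i w)"
  unfolding positive_word_def by (meson in_set_takeD)

lemma positive_word_drop: "positive_word w \<Longrightarrow> positive_word (drop i w)"
  unfolding positive_word_def by (meson in_set_dropD)

lemma Hprod_Suc:
  "Hprod (Suc k) w = (\<Sum>i\<le>length w. qvar ^ i * Hprod k (take i w) * sp (drop i w))"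
proof (induction k arbitrary: w)
  case 0
  show ?case
    by (auto simp: ncmult_def Hser_eq min_def mult_ac intro!: sum.cong)
next
  case (Suc k)
  let ?m = "length w"
  define g where "g i j = qvar ^ (Suc (Suc k) * i + j) * sp (take i w) *
      Hprod k (take j (drop i w)) * sp (drop (i + j) w)" for i j
  have "Hprod (Suc (Suc k)) w = (\<Sum>i\<le>?m. Hser (qvar ^ Suc (Suc k)) (take i w) * Hprod (Suc k) (drop i w))"
    by (simp add: ncmult_def)
  also have "\<dots> = (\<Sum>i\<le>?m. \<Sum>j\<le>?m - i. g i j)"
  proof (intro sum.cong refl)
    fix i assume i: "i \<in> {..?m}"
    have e: "Hprod (Suc k) (drop i w) = (\<Sum>j\<le>?m - i. qvar ^ j * Hprod k (take j (drop i w)) * sp (drop (i + j) w))"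
      using Suc.IH[of "drop i w"] by (simp add: add.commute del: Hprod.simps)
    show "Hser (qvar ^ Suc (Suc k)) (take i w) * Hprod (Suc k) (drop i w) = (\<Sum>j\<le>?m - i. g i j)"
    proof -
      have li: "length (take i w) = i" using i by simp
      show ?thesis
        unfolding e Hser_eq li sum_distrib_left g_def
        by (intro sum.cong refl) (simp only: power_add power_mult mult_ac power_commutes[symmetric] flip: power_mult)
    qed
  qed
  also have "\<dots> = (\<Sum>(i,j)\<in>{(i,j). i + j \<le> ?m}. g i j)"
    by (simp add: sum.Sigma) (intro sum.cong; force)
  also have "\<dots> = (\<Sum>l\<le>?m. \<Sum>i\<le>l. g i (l - i))"
    by (rule sum.triangle_reindex_eq)
  also have "\<dots> = (\<Sum>l\<le>?m. qvar ^ l * Hprod (Suc k) (take l w) * sp (drop l w))"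
  proof (intro sum.cong refl)
    fix l assume l: "l \<in> {..?m}"
    have "qvar ^ l * Hprod (Suc k) (take l w) * sp (drop l w)
        = (\<Sum>i\<le>l. qvar ^ l * (Hser (qvar ^ Suc k) (take i (take l w)) * Hprod k (drop i (take l w)))
            * sp (drop l w))"
      using l by (simp add: ncmult_def sum_distrib_left sum_distrib_right min_def)
    also have "\<dots> = (\<Sum>i\<le>l. g i (l - i))"
    proof (intro sum.cong refl)
      fix i assume i: "i \<in> {..l}"
      have 1: "take i (take l w) = take i w" "length (take i w) = i" "drop i (take l w) = take (l - i) (drop i w)"
          "drop (i + (l - i)) w = drop l w"
        using i l by (auto simp: drop_take min_def)
      have 2: "qvar ^ l * (qvar ^ Suc k) ^ i = (qvar::coef) ^ (Suc (Suc k) * i + (l - i))"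
      proof -
        have "Suc (Suc k) * i + (l - i) = l + Suc k * i" using i by simp
        then show ?thesis by (simp only: power_add power_mult)
      qed
      show "qvar ^ l * (Hser (qvar ^ Suc k) (take i (take l w)) * Hprod k (drop i (take l w))) * sp (drop l w) = g i (l - i)"
        unfolding g_def Hser_eq 1 2[symmetric] by (simp only: mult_ac)
    qed
    finally show "(\<Sum>i\<le>l. g i (l - i)) = qvar ^ l * Hprod (Suc k) (take l w) * sp (drop l w)" by simp
  qed
  finally show ?case .
qed

lemma Hprod_nonpos: "\<not> positive_word w \<Longrightarrow> Hprod k w = 0"
proof (induction k arbitrary: w)
  case 0 then show ?case by (simp add: Hser_eq sp_def)
next
  case (Suc k)
  show ?case unfolding Hprod_Suc
  proof (intro sum.neutral ballI)
    fix i
    show "qvar ^ i * Hprod k (take i w) * sp (drop i w) = 0"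
    proof (cases "positive_word (take i w)")
      case True
      then have "\<not> positive_word (drop i w)" using Suc.prems positive_word_take_drop by blast
      then show ?thesis by (simp add: sp_def)
    next
      case False then show ?thesis using Suc.IH by simp
    qed
  qed
qed

definition F :: "nat list \<Rightarrow> coef" where "F w = Phi (\<lambda>k. Hprod k w)"

lemma LHS_eq: "ncsuminf (\<lambda>k. ncsmult (tvar ^ k) (Hprod k)) w = F w"
  by (simp add: ncsuminf_def ncsmult_def tvar_def F_def Phi_suminf)

lemma F_nonpos: "\<not> positive_word w \<Longrightarrow> F w = 0"
  by (simp add: F_def Hprod_nonpos Phi_zero del: Hprod.simps)

lemma F_rec: "F w = sp w + tvar * (\<Sum>i\<le>length w. qvar ^ i * sp (drop i w) * F (take i w))"
proof -
  have "F w = Hprod 0 w + fps_X * Phi (\<lambda>k. Hprod (Suc k) w)"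
    unfolding F_def by (rule Phi_head)
  also have "Phi (\<lambda>k. Hprod (Suc k) w) = Phi (\<lambda>k. \<Sum>i\<le>length w. (qvar ^ i * sp (drop i w)) * Hprod k (take i w))"
    unfolding Hprod_Suc by (simp only: mult_ac)
  also have "\<dots> = (\<Sum>i\<le>length w. qvar ^ i * sp (drop i w) * F (take i w))"
    by (simp only: Phi_sum Phi_cmult F_def)
  finally show ?thesis by (simp add: Hprod0 tvar_def del: Hprod.simps)
qed


lemma length_le_sum_list: "\<forall>x\<in>set xs. (1::nat) \<le> x \<Longrightarrow> length xs \<le> sum_list xs"
  by (induction xs) auto

lemma comp_finite: "finite (compositions n)"
proof -
  have "compositions n \<subseteq> {xs. set xs \<subseteq> {..n} \<and> length xs \<le> n}"
    unfolding compositions_def using length_le_sum_list member_le_sum_list by fastforce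
  then show ?thesis by (rule finite_subset) (intro finite_lists_length_le finite_atMost)
qed

lemma comp_bounds_sub:
  assumes "L \<in> compositions n" shows "comp_bounds L \<subseteq> {1..<n}"
proof
  fix b assume "b \<in> comp_bounds L"
  then obtain j where j: "b = sum_list (take j L)" "1 \<le> j" "j < length L"
    by (auto simp: comp_bounds_def)
  have pos: "\<forall>x\<in>set L. 1 \<le> x" and sL: "sum_list L = n" using assms by (auto simp: compositions_def)
  have "L ! 0 \<in> set (take j L)" using j by (auto simp: in_set_conv_nth intro!: exI[of _ 0])
  then have "L ! 0 \<le> b" using j member_le_sum_list by blast
  moreover have "1 \<le> L ! 0"
  proof -
    have "L ! 0 \<in> set L" using j by (intro nth_mem) linarith
    then show ?thesis using pos by blast
  qed
  moreover have "L ! j \<in> set (drop j L)" using j by (auto simp: in_set_conv_nth intro!: exI[of _ 0])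
  then have "L ! j \<le> sum_list (drop j L)" using member_le_sum_list by blast
  moreover have "1 \<le> L ! j"
  proof -
    have "L ! j \<in> set L" using j by (intro nth_mem) linarith
    then show ?thesis using pos by blast
  qed
  moreover have "n = b + sum_list (drop j L)"
    using sL j by (metis append_take_drop_id sum_list_append)
  ultimately show "b \<in> {1..<n}" by auto
qed

lemma comp_bounds_snoc:
  "comp_bounds (L' @ [a]) = comp_bounds L' \<union> (if L' = [] then {} else {sum_list L'})"
proof -
  have "comp_bounds (L' @ [a]) = {sum_list (take j L') | j. 1 \<le> j \<and> j \<le> length L'}"
  proof -
    have t: "take j (L' @ [a]) = take j L'" if "j \<le> length L'" for j using that by simp
    show ?thesis unfolding comp_bounds_def using t by (auto simp: less_Suc_eq_le) (rule exI, auto)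
  qed
  also have "\<dots> = comp_bounds L' \<union> (if L' = [] then {} else {sum_list L'})"
    unfolding comp_bounds_def by (auto simp: le_less) (rule exI[of _ "length L'"], auto simp: Suc_lessI)
  finally show ?thesis .
qed

lemma des_snoc: "L' \<noteq> [] \<Longrightarrow> des (L' @ [a]) = des L' + 1"
  by (simp add: des_def)

lemma maj_snoc: "maj (L' @ [a]) = maj L' + sum_list L'"
proof -
  let ?k = "length L'"
  have "maj (L' @ [a]) = (\<Sum>i<?k. (?k - i) * L' ! i)"
    by (simp add: maj_def nth_append)
  also have "\<dots> = (\<Sum>i<?k. (?k - 1 - i) * L' ! i + L' ! i)"
  proof (intro sum.cong refl)
    fix x assume "x \<in> {..<?k}"
    then have "?k - x = Suc (?k - 1 - x)" by auto
    then show "(?k - x) * L' ! x = (?k - 1 - x) * L' ! x + L' ! x" by simp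
  qed
  also have "\<dots> = maj L' + sum_list L'"
    by (simp add: maj_def sum.distrib sum_list_sum_nth atLeast0LessThan)
  finally show ?thesis .
qed

definition dset :: "nat list \<Rightarrow> nat set" where
  "dset w = {p. 0 < p \<and> p < length w \<and> w ! p < w ! (p - 1)}"

definition lastdes :: "nat list \<Rightarrow> nat" where
  "lastdes w = Max (insert 0 (dset w))"

lemma dset_finite: "finite (dset w)"
  by (rule finite_subset[of _ "{..<length w}"]) (auto simp: dset_def)

lemma lastdes_ge: "p \<in> dset w \<Longrightarrow> p \<le> lastdes w"
  unfolding lastdes_def using dset_finite by simp

lemma lastdes_in: "0 < lastdes w \<Longrightarrow> lastdes w \<in> dset w"
  unfolding lastdes_def using dset_finite Max_in[of "insert 0 (dset w)"] by auto

lemma lastdes_less: "w \<noteq> [] \<Longrightarrow> lastdes w < length w"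
  using lastdes_in[of w] by (cases "lastdes w = 0") (auto simp: dset_def)

lemma lastdes_0: "lastdes w = 0 \<Longrightarrow> dset w = {}"
  using lastdes_ge[of _ w] by (auto simp: dset_def)

lemma sorted_drop_iff: "sorted (drop i w) \<longleftrightarrow> lastdes w \<le> i"
proof
  assume s: "sorted (drop i w)"
  show "lastdes w \<le> i"
  proof (rule ccontr)
    assume "\<not> lastdes w \<le> i"
    then have p: "lastdes w \<in> dset w" "i < lastdes w" using lastdes_in by auto
    define j where "j = lastdes w - 1 - i"
    have "Suc j < length (drop i w)" using p by (auto simp: dset_def j_def)
    then have "drop i w ! j \<le> drop i w ! Suc j" using s sorted_iff_nth_Suc by blast
    moreover have "i + j = lastdes w - 1" "i + Suc j = lastdes w" using p by (auto simp: j_def)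
    ultimately show False using p by (auto simp: dset_def)
  qed
next
  assume le: "lastdes w \<le> i"
  show "sorted (drop i w)"
    unfolding sorted_iff_nth_Suc
  proof (intro allI impI)
    fix j assume j: "Suc j < length (drop i w)"
    show "drop i w ! j \<le> drop i w ! Suc j"
    proof (rule ccontr)
      assume "\<not> ?thesis"
      then have "Suc (i + j) \<in> dset w" using j by (auto simp: dset_def)
      then have "Suc (i + j) \<le> lastdes w" by (rule lastdes_ge)
      with le show False by simp
    qed
  qed
qed

lemma sorted_iff_lastdes: "sorted w \<longleftrightarrow> lastdes w = 0"
  using sorted_drop_iff[of 0 w] by simp

lemma dset_take: "dset (take i w) = {p \<in> dset w. p < i}"
  by (auto simp: dset_def)

lemma lastdes_take: "lastdes w < i \<Longrightarrow> lastdes (take i w) = lastdes w"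
proof -
  assume a: "lastdes w < i"
  have "dset (take i w) = dset w"
    unfolding dset_take using a lastdes_ge[of _ w] by fastforce
  then show ?thesis by (simp add: lastdes_def)
qed


definition Sw :: "nat list \<Rightarrow> coef" where
  "Sw w = (\<Sum>L\<in>compositions (length w). tvar ^ des L * qvar ^ maj L * rser L w)"

lemma rser_comp:
  assumes L: "L \<in> compositions (length w)"
  shows "rser L w = (if positive_word w \<and> dset w = comp_bounds L then 1 else 0)"
proof -
  have sL: "sum_list L = length w" using L by (simp add: compositions_def)
  have cb: "comp_bounds L \<subseteq> {1..<length w}" using comp_bounds_sub[OF L] .
  have "(\<forall>i. Suc i < length w \<longrightarrow> (w ! i > w ! Suc i \<longleftrightarrow> Suc i \<in> comp_bounds L))
        \<longleftrightarrow> dset w = comp_bounds L"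
  proof
    assume H: "\<forall>i. Suc i < length w \<longrightarrow> (w ! i > w ! Suc i \<longleftrightarrow> Suc i \<in> comp_bounds L)"
    show "dset w = comp_bounds L"
    proof (intro set_eqI iffI)
      fix p assume "p \<in> dset w"
      then have "0 < p" "p < length w" "w ! p < w ! (p - 1)" by (auto simp: dset_def)
      then show "p \<in> comp_bounds L" using H[rule_format, of "p - 1"] by simp
    next
      fix p assume p: "p \<in> comp_bounds L"
      then have "0 < p" "p < length w" using cb by auto
      then show "p \<in> dset w" using H[rule_format, of "p - 1"] p by (simp add: dset_def)
    qed
  next
    assume E: "dset w = comp_bounds L"
    show "\<forall>i. Suc i < length w \<longrightarrow> (w ! i > w ! Suc i \<longleftrightarrow> Suc i \<in> comp_bounds L)"
      unfolding E[symmetric] by (auto simp: dset_def)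
  qed
  then show ?thesis unfolding rser_def using sL by auto
qed

lemma Sw_nonpos: "\<not> positive_word w \<Longrightarrow> Sw w = 0"
  by (simp add: Sw_def rser_def)

lemma Sw_pos: "positive_word w \<Longrightarrow>
  Sw w = (\<Sum>L\<in>compositions (length w). if dset w = comp_bounds L then tvar ^ des L * qvar ^ maj L else 0)"
  unfolding Sw_def by (intro sum.cong refl) (simp add: rser_comp)

lemma comp_struct:
  assumes "L \<in> compositions m" "0 < m"
  obtains L' a where "L = L' @ [a]" "1 \<le> a" "L' \<in> compositions (sum_list L')" "sum_list L' + a = m"
proof -
  have "L \<noteq> []" using assms by (auto simp: compositions_def)
  then obtain L' a where "L = L' @ [a]" by (metis rev_exhaust)
  then show ?thesis using assms that by (auto simp: compositions_def)
qed

lemma comp_bounds_single: "comp_bounds [a] = {}"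
  by (simp add: comp_bounds_def)

lemma lastdes_of_comp:
  assumes L: "L' @ [a] \<in> compositions m" and E: "dset w = comp_bounds (L' @ [a])"
  shows "lastdes w = (if L' = [] then 0 else sum_list L')"
proof (cases "L' = []")
  case True
  then have "dset w = {}" using E by (simp add: comp_bounds_single)
  then show ?thesis using True by (simp add: lastdes_def)
next
  case False
  have L': "L' \<in> compositions (sum_list L')" using L by (auto simp: compositions_def)
  have sub: "comp_bounds L' \<subseteq> {1..<sum_list L'}" by (rule comp_bounds_sub[OF L'])
  have "dset w = comp_bounds L' \<union> {sum_list L'}" using E False by (simp add: comp_bounds_snoc)
  then have "lastdes w = Max (insert 0 (comp_bounds L' \<union> {sum_list L'}))" by (simp add: lastdes_def)
  also have "\<dots> = sum_list L'"
    using sub finite_subset[OF sub] by (intro Max_eqI) auto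
  finally show ?thesis using False by simp
qed

lemma comp0: "compositions 0 = {[]}"
  unfolding compositions_def
proof (intro set_eqI iffI)
  fix L :: "nat list" assume "L \<in> {L. (\<forall>x\<in>set L. 1 \<le> x) \<and> sum_list L = 0}"
  then show "L \<in> {[]}" by (cases L) auto
qed auto


lemma Sw_sorted:
  assumes pos: "positive_word w" and s: "sorted w"
  shows "Sw w = 1"
proof -
  have D: "dset w = {}" using s by (simp add: sorted_iff_lastdes lastdes_0)
  show ?thesis
  proof (cases "length w = 0")
    case True
    then show ?thesis using pos D by (simp add: Sw_pos comp0 des_def maj_def comp_bounds_def)
  next
    case False
    let ?m = "length w"
    have "Sw w = (\<Sum>L\<in>compositions ?m. if {} = comp_bounds L then tvar ^ des L * qvar ^ maj L else 0)"
      using Sw_pos[OF pos] D by simp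
    also have "\<dots> = (\<Sum>L\<in>{[?m]}. if {} = comp_bounds L then tvar ^ des L * qvar ^ maj L else 0)"
    proof (rule sum.mono_neutral_right)
      show "finite (compositions ?m)" by (rule comp_finite)
      show "{[?m]} \<subseteq> compositions ?m" using False by (auto simp: compositions_def Suc_le_eq)
      show "\<forall>L\<in>compositions ?m - {[?m]}. (if {} = comp_bounds L then tvar ^ des L * qvar ^ maj L else 0) = 0"
      proof
        fix L assume L: "L \<in> compositions ?m - {[?m]}"
        show "(if {} = comp_bounds L then tvar ^ des L * qvar ^ maj L else 0) = 0"
        proof (rule ccontr)
          assume "\<not> ?thesis"
          then have cb: "comp_bounds L = {}" by (auto split: if_splits)
          obtain L' a where La: "L = L' @ [a]" "sum_list L' + a = ?m"
            using comp_struct[of L ?m] L False by blast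
          then have "L' = []" using cb by (auto simp: comp_bounds_snoc split: if_splits)
          then show False using La L by auto
        qed
      qed
    qed
    also have "\<dots> = 1" by (simp add: comp_bounds_single des_def maj_def)
    finally show ?thesis .
  qed
qed

lemma Sw_rec:
  assumes pos: "positive_word w" and r: "0 < lastdes w"
  shows "Sw w = tvar * qvar ^ lastdes w * Sw (take (lastdes w) w)"
proof -
  let ?r = "lastdes w" and ?m = "length w"
  have rin: "?r \<in> dset w" using lastdes_in r by blast
  then have rm: "?r < ?m" by (simp add: dset_def)
  have Dt: "dset (take ?r w) = {p \<in> dset w. p < ?r}" by (rule dset_take)
  have Dw: "dset w = dset (take ?r w) \<union> {?r}"
    using Dt rin lastdes_ge[of _ w] by fastforce
  have Dtsub: "dset (take ?r w) \<subseteq> {..<?r}" using Dt by auto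
  define h where "h L = (if dset w = comp_bounds L then tvar ^ des L * qvar ^ maj L else 0)" for L
  define h' where "h' L = (if dset (take ?r w) = comp_bounds L then tvar ^ des L * qvar ^ maj L else 0)" for L
  have "Sw w = (\<Sum>L\<in>compositions ?m. h L)" using Sw_pos[OF pos] by (simp add: h_def)
  also have "\<dots> = (\<Sum>L\<in>(\<lambda>L'. L' @ [?m - ?r]) ` compositions ?r. h L)"
  proof (rule sum.mono_neutral_right)
    show "finite (compositions ?m)" by (rule comp_finite)
    show "(\<lambda>L'. L' @ [?m - ?r]) ` compositions ?r \<subseteq> compositions ?m"
      using rm by (auto simp: compositions_def)
    show "\<forall>L\<in>compositions ?m - (\<lambda>L'. L' @ [?m - ?r]) ` compositions ?r. h L = 0"
    proof
      fix L assume L: "L \<in> compositions ?m - (\<lambda>L'. L' @ [?m - ?r]) ` compositions ?r"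
      show "h L = 0"
      proof (rule ccontr)
        assume "h L \<noteq> 0"
        then have E: "dset w = comp_bounds L" by (auto simp: h_def split: if_splits)
        obtain L' a where La: "L = L' @ [a]" "L' \<in> compositions (sum_list L')" "sum_list L' + a = ?m"
          using comp_struct[of L ?m] L rm by (metis DiffD1 gr_zeroI not_less0)
        have "?r = (if L' = [] then 0 else sum_list L')"
          using lastdes_of_comp[of L' a ?m w] L La E by auto
        then have "L' \<noteq> []" "sum_list L' = ?r" using r by (auto split: if_splits)
        then have "L \<in> (\<lambda>L'. L' @ [?m - ?r]) ` compositions ?r"
          using La by (auto intro!: image_eqI[of _ _ L'])
        then show False using L by blast
      qed
    qed
  qed
  also have "\<dots> = (\<Sum>L'\<in>compositions ?r. h (L' @ [?m - ?r]))"
    by (subst sum.reindex) (auto simp: inj_on_def)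
  also have "\<dots> = (\<Sum>L'\<in>compositions ?r. tvar * qvar ^ ?r * h' L')"
  proof (intro sum.cong refl)
    fix L' assume L': "L' \<in> compositions ?r"
    have ne: "L' \<noteq> []" and sl: "sum_list L' = ?r" using L' r by (auto simp: compositions_def)
    have cbs: "comp_bounds L' \<subseteq> {1..<?r}" using comp_bounds_sub[OF L'] .
    have cbL: "comp_bounds (L' @ [?m - ?r]) = comp_bounds L' \<union> {?r}"
      using ne sl by (simp add: comp_bounds_snoc)
    have iff: "dset w = comp_bounds L' \<union> {?r} \<longleftrightarrow> dset (take ?r w) = comp_bounds L'"
    proof
      assume "dset w = comp_bounds L' \<union> {?r}"
      then show "dset (take ?r w) = comp_bounds L'" using Dt cbs by auto
    next
      assume "dset (take ?r w) = comp_bounds L'"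
      then show "dset w = comp_bounds L' \<union> {?r}" using Dw by simp
    qed
    show "h (L' @ [?m - ?r]) = tvar * qvar ^ ?r * h' L'"
      unfolding h_def h'_def cbL iff using ne sl
      by (simp add: des_snoc maj_snoc power_add mult_ac)
  qed
  also have "\<dots> = tvar * qvar ^ ?r * Sw (take ?r w)"
    using Sw_pos[OF positive_word_take[OF pos, of ?r]] rm
    by (simp add: h'_def sum_distrib_left min_def)
  finally show ?thesis .
qed

lemma Sw_take:
  assumes pos: "positive_word w" and i: "lastdes w < i" "i \<le> length w"
  shows "Sw (take i w) = Sw w"
proof -
  have lt: "lastdes (take i w) = lastdes w" using lastdes_take[OF i(1)] .
  have post: "positive_word (take i w)" using positive_word_take[OF pos] .
  show ?thesis
  proof (cases "lastdes w = 0")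
    case True
    then show ?thesis using Sw_sorted pos post lt by (simp add: sorted_iff_lastdes)
  next
    case False
    have "take (lastdes w) (take i w) = take (lastdes w) w" using i by (simp add: min_def)
    then show ?thesis using Sw_rec[OF pos] Sw_rec[OF post] lt False by simp
  qed
qed


definition Pp :: "nat \<Rightarrow> coef" where "Pp n = (\<Prod>i\<le>n. 1 - tvar * qvar ^ i)"
definition Qp :: "nat \<Rightarrow> nat \<Rightarrow> coef" where "Qp a b = (\<Prod>j\<in>{a..<b}. 1 - tvar * qvar ^ j)"

lemma Pp_split: "Pp m = Qp 0 m * (1 - tvar * qvar ^ m)"
  by (simp add: Pp_def Qp_def atLeast0LessThan lessThan_Suc_atMost[symmetric] del: lessThan_Suc_atMost)

lemma Qp_split: "i < m \<Longrightarrow> Qp 0 m = Pp i * Qp (Suc i) m"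
  unfolding Pp_def Qp_def lessThan_Suc_atMost[symmetric] atLeast0LessThan[symmetric]
  by (rule prod.atLeastLessThan_concat[symmetric]) auto

lemma Qp_step: "a < m \<Longrightarrow> Qp a m = (1 - tvar * qvar ^ a) * Qp (Suc a) m"
  unfolding Qp_def by (rule prod.atLeast_Suc_lessThan)

lemma K: "a \<le> m \<Longrightarrow> Qp a m + (\<Sum>i\<in>{a..<m}. tvar * qvar ^ i * Qp (Suc i) m) = 1"
proof (induction a rule: inc_induct)
  case base then show ?case by (simp add: Qp_def)
next
  case (step n)
  have "Qp n m + (\<Sum>i\<in>{n..<m}. tvar * qvar ^ i * Qp (Suc i) m)
      = (1 - tvar * qvar ^ n) * Qp (Suc n) m + (tvar * qvar ^ n * Qp (Suc n) m
         + (\<Sum>i\<in>{Suc n..<m}. tvar * qvar ^ i * Qp (Suc i) m))"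
    using step.hyps by (simp add: Qp_step sum.atLeast_Suc_lessThan)
  also have "\<dots> = Qp (Suc n) m + (\<Sum>i\<in>{Suc n..<m}. tvar * qvar ^ i * Qp (Suc i) m)"
    by (simp add: algebra_simps)
  finally show ?case using step.IH by simp
qed

lemma Pp_nth0: "fps_nth (Pp n) 0 = 1"
proof -
  have "fps_nth (\<Prod>i\<in>A. 1 - tvar * qvar ^ i) 0 = 1" if "finite A" for A
    using that by (induction A rule: finite_induct) (auto simp: tvar_def)
  then show ?thesis by (simp add: Pp_def)
qed

lemma Pp_inv: "Pp n * inverse (Pp n) = 1"
proof -
  have "inverse (1::rat fps) = 1" by simp
  then have "fps_nth (Pp n) 0 * inverse (fps_nth (Pp n) 0) = 1" by (simp add: Pp_nth0)
  from fps_right_inverse[OF this] show ?thesis by (simp add: fps_inverse_def)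
qed

lemma RHS_eq:
  "ncsuminf (\<lambda>n. ncsmult (inverse (\<Prod>i\<le>n. 1 - tvar * qvar ^ i))
       (\<lambda>w. \<Sum>L\<in>compositions n. tvar ^ des L * qvar ^ maj L * rser L w)) w
   = inverse (Pp (length w)) * Sw w"
proof -
  have "ncsuminf (\<lambda>n. ncsmult (inverse (\<Prod>i\<le>n. 1 - tvar * qvar ^ i))
       (\<lambda>w. \<Sum>L\<in>compositions n. tvar ^ des L * qvar ^ maj L * rser L w)) w
    = (\<Sum>n\<in>{length w}. inverse (\<Prod>i\<le>n. 1 - tvar * qvar ^ i) *
          (\<Sum>L\<in>compositions n. tvar ^ des L * qvar ^ maj L * rser L w))"
    unfolding ncsuminf_def ncsmult_def
    by (rule suminf_finite) (auto simp: rser_def compositions_def intro!: sum.neutral)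
  then show ?thesis by (simp add: Pp_def Sw_def)
qed

lemma sp_drop: "positive_word w \<Longrightarrow> sp (drop i w) = (if lastdes w \<le> i then 1 else 0)"
  by (simp add: sp_def positive_word_drop sorted_drop_iff)

lemma main_word: "F w * Pp (length w) = Sw w"
proof (induction "length w" arbitrary: w rule: less_induct)
  case less
  show ?case
  proof (cases "positive_word w")
    case False
    then show ?thesis by (simp add: F_nonpos Sw_nonpos)
  next
    case pos: True
    define m where "m = length w"
    define r where "r = lastdes w"
    have rm: "r \<le> m" using lastdes_less[of w] by (cases "w = []") (auto simp: r_def m_def lastdes_def dset_def)
    have IH: "F (take i w) * Pp i = Sw (take i w)" if "i < m" for i
      using less[of "take i w"] that by (simp add: m_def min_def)
    have "(\<Sum>i\<le>m. qvar ^ i * sp (drop i w) * F (take i w))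
        = (\<Sum>i\<in>{..m}. if r \<le> i then qvar ^ i * F (take i w) else 0)"
      using pos by (intro sum.cong refl) (simp add: sp_drop r_def)
    also have "\<dots> = (\<Sum>i\<in>{r..m}. qvar ^ i * F (take i w))"
      by (rule sum.mono_neutral_cong_right) auto
    also have "\<dots> = (\<Sum>i\<in>{r..<m}. qvar ^ i * F (take i w)) + qvar ^ m * F w"
      using rm by (simp add: sum.last_plus m_def add.commute)
    finally have s: "(\<Sum>i\<le>m. qvar ^ i * sp (drop i w) * F (take i w))
        = (\<Sum>i\<in>{r..<m}. qvar ^ i * F (take i w)) + qvar ^ m * F w" .
    have rec: "F w * (1 - tvar * qvar ^ m) = sp w + (\<Sum>i\<in>{r..<m}. tvar * qvar ^ i * F (take i w))"
    proof -
      have "F w = sp w + tvar * ((\<Sum>i\<in>{r..<m}. qvar ^ i * F (take i w)) + qvar ^ m * F w)"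
        using F_rec[of w] s by (simp add: m_def)
      then show ?thesis by (simp add: algebra_simps sum_distrib_left)
    qed
    have "F w * Pp m = (F w * (1 - tvar * qvar ^ m)) * Qp 0 m"
      by (simp add: Pp_split mult_ac)
    also have "\<dots> = sp w * Qp 0 m + (\<Sum>i\<in>{r..<m}. tvar * qvar ^ i * (F (take i w) * Qp 0 m))"
      unfolding rec distrib_right sum_distrib_right by (simp add: mult_ac)
    also have "\<dots> = sp w * Qp 0 m + (\<Sum>i\<in>{r..<m}. tvar * qvar ^ i * Sw (take i w) * Qp (Suc i) m)"
    proof -
      have "F (take i w) * Qp 0 m = Sw (take i w) * Qp (Suc i) m" if "i \<in> {r..<m}" for i
        using that IH[of i] Qp_split[of i m] by (simp add: mult_ac)
      then show ?thesis by (intro arg_cong2[where f="(+)"] refl sum.cong) (simp_all add: mult_ac)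
    qed
    also have "\<dots> = Sw w"
    proof (cases "r = 0")
      case True
      then have sw: "sorted w" by (simp add: r_def sorted_iff_lastdes)
      have "Sw (take i w) = 1" for i
        using Sw_sorted[OF positive_word_take[OF pos] sorted_wrt_take[OF sw]] .
      then have "sp w * Qp 0 m + (\<Sum>i\<in>{r..<m}. tvar * qvar ^ i * Sw (take i w) * Qp (Suc i) m)
          = Qp 0 m + (\<Sum>i\<in>{0..<m}. tvar * qvar ^ i * Qp (Suc i) m)"
        using True sw pos by (simp add: sp_def)
      also have "\<dots> = 1" by (rule K) simp
      finally show ?thesis using Sw_sorted[OF pos sw] by simp
    next
      case False
      then have r0: "0 < r" by simp
      have rm': "r < m" using lastdes_in[of w] r0 by (simp add: r_def m_def dset_def)
      have spw: "sp w = 0" using r0 by (simp add: sp_def r_def sorted_iff_lastdes)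
      have swr: "Sw w = tvar * qvar ^ r * Sw (take r w)" using Sw_rec[OF pos] r0 by (simp add: r_def)
      have swi: "Sw (take i w) = Sw w" if "i \<in> {Suc r..<m}" for i
        using Sw_take[OF pos, of i] that by (simp add: r_def m_def)
      have "sp w * Qp 0 m + (\<Sum>i\<in>{r..<m}. tvar * qvar ^ i * Sw (take i w) * Qp (Suc i) m)
          = tvar * qvar ^ r * Sw (take r w) * Qp (Suc r) m
            + (\<Sum>i\<in>{Suc r..<m}. tvar * qvar ^ i * Sw (take i w) * Qp (Suc i) m)"
        using rm' spw by (simp add: sum.atLeast_Suc_lessThan)
      also have "\<dots> = Sw w * (Qp (Suc r) m + (\<Sum>i\<in>{Suc r..<m}. tvar * qvar ^ i * Qp (Suc i) m))"
      proof -
        have "(\<Sum>i\<in>{Suc r..<m}. tvar * qvar ^ i * Sw (take i w) * Qp (Suc i) m)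
            = (\<Sum>i\<in>{Suc r..<m}. Sw w * (tvar * qvar ^ i * Qp (Suc i) m))"
          by (intro sum.cong refl) (simp add: swi mult_ac)
        then show ?thesis unfolding distrib_left sum_distrib_left[symmetric] swr by (simp add: mult_ac)
      qed
      also have "\<dots> = Sw w" using K[of "Suc r" m] rm' by simp
      finally show ?thesis .
    qed
    finally show ?thesis by (simp add: m_def)
  qed
qed

theorem lemma17:
  shows "ncsuminf (\<lambda>k. ncsmult (tvar ^ k) (Hprod k)) =
    ncsuminf (\<lambda>n. ncsmult (inverse (\<Prod>i\<le>n. 1 - tvar * qvar ^ i))
       (\<lambda>w. \<Sum>L\<in>compositions n. tvar ^ des L * qvar ^ maj L * rser L w))"
proof
  fix w
  have "F w = F w * (Pp (length w) * inverse (Pp (length w)))" by (simp add: Pp_inv)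
  also have "\<dots> = inverse (Pp (length w)) * Sw w"
    by (simp only: mult.assoc[symmetric] main_word mult.commute)
  finally show "ncsuminf (\<lambda>k. ncsmult (tvar ^ k) (Hprod k)) w =
    ncsuminf (\<lambda>n. ncsmult (inverse (\<Prod>i\<le>n. 1 - tvar * qvar ^ i))
       (\<lambda>w. \<Sum>L\<in>compositions n. tvar ^ des L * qvar ^ maj L * rser L w)) w"
    by (simp only: LHS_eq RHS_eq)
qed

end
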